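(* Let $P=\sum_{|\nu|\le d}a_\nu X^\nu\in\mathbb{C}[X_1,\dots,X_n]_{int}$ with $a_\nu\in{}^*\mathbb{C}$ and $d\in{}^*\mathbb{N}$ infinite. Then $P$ is absolutely bounded if and only if (i) $a_\nu\in{}^b\mathbb{C}$ for every $\nu\in\mathbb{N}^n$ (i.e. $|\nu|$ finite), and (ii) $|a_\nu|^{1/|\nu|}\in{}^i\mathbb{C}$ for every $\nu$ with $|\nu|$ infinite and $|\nu|\le d$.
   Context: ${}^*\mathbb{C}$ is an ultrapower of $\mathbb{C}$ by a nonprincipal ultrafilter; ${}^b\mathbb{C}$ (resp. ${}^i\mathbb{C}$) denotes the elements $z$ with $|z|\le r$ for some standard real $r$ (resp. $|z|<r$ for every standard real $r>0$); ${}^*\mathbb{N}$ is the corresponding extension of $\mathbb{N}$. For finite $n$, $\mathbb{C}[X_1,\dots,X_n]_{int}$ is the ultrapower of $\mathbb{C}[X_1,\dots,X_n]$ (internal polynomials); each is written uniquely as $\sum_{|\nu|\le d}a_\nu X^\nu$ over multi-indices $\nu\in{}^*\mathbb{N}^n$ and is viewed as an internal function ${}^*\mathbb{C}^n\to{}^*\mathbb{C}$. $|P|:=\sum_{|\nu|\le d}|a_\nu|X^\nu$. $P$ is absolutely bounded if $|P|({}^b\mathbb{C}^n)\subset{}^b\mathbb{C}$. *)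

theory Defs
  imports "HOL-Analysis.Analysis"
begin

text \<open>Ultrapowers are modelled by index families \<open>'i \<Rightarrow> _\<close> taken modulo an
ultrafilter \<open>U\<close> on the index type \<open>'i\<close>.\<close>

definition ultrafilter :: "'i filter \<Rightarrow> bool" where
  "ultrafilter U \<longleftrightarrow> U \<noteq> bot \<and> (\<forall>P. eventually P U \<or> eventually (\<lambda>x. \<not> P x) U)"

definition nonprincipal :: "'i filter \<Rightarrow> bool" where
  "nonprincipal U \<longleftrightarrow> (\<forall>j. \<not> eventually (\<lambda>x. x = j) U)"

definition limited :: "'i filter \<Rightarrow> ('i \<Rightarrow> complex) \<Rightarrow> bool" where
  "limited U z \<longleftrightarrow> (\<exists>r::real. eventually (\<lambda>i. norm (z i) \<le> r) U)"

definition infinitesimal :: "'i filter \<Rightarrow> ('i \<Rightarrow> complex) \<Rightarrow> bool" where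
  "infinitesimal U z \<longleftrightarrow> (\<forall>r::real. r > 0 \<longrightarrow> eventually (\<lambda>i. norm (z i) < r) U)"

definition hyp_infinite :: "'i filter \<Rightarrow> ('i \<Rightarrow> nat) \<Rightarrow> bool" where
  "hyp_infinite U d \<longleftrightarrow> (\<forall>N::nat. eventually (\<lambda>i. N < d i) U)"

definition mlen :: "('n::finite \<Rightarrow> nat) \<Rightarrow> nat" where
  "mlen \<nu> = (\<Sum>k\<in>UNIV. \<nu> k)"

text \<open>The internal polynomial \<open>|P| = \<Sum>_{|\<nu>|\<le>d} |a_\<nu>| X^\<nu>\<close>, evaluated at an internal
point \<open>z \<in> *\<complex>^n\<close>, componentwise in the index.\<close>
definition abs_poly_eval ::
  "('i \<Rightarrow> ('n::finite \<Rightarrow> nat) \<Rightarrow> complex) \<Rightarrow> ('i \<Rightarrow> nat) \<Rightarrow> ('i \<Rightarrow> 'n \<Rightarrow> complex) \<Rightarrow> 'i \<Rightarrow> complex" where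
  "abs_poly_eval a d z i =
     (\<Sum>\<nu>\<in>{\<nu>::'n \<Rightarrow> nat. mlen \<nu> \<le> d i}.
        complex_of_real (norm (a i \<nu>)) * (\<Prod>k\<in>UNIV. z i k ^ \<nu> k))"

definition abs_bounded ::
  "'i filter \<Rightarrow> ('i \<Rightarrow> ('n::finite \<Rightarrow> nat) \<Rightarrow> complex) \<Rightarrow> ('i \<Rightarrow> nat) \<Rightarrow> bool" where
  "abs_bounded U a d \<longleftrightarrow>
     (\<forall>z::'i \<Rightarrow> 'n \<Rightarrow> complex. (\<forall>k. limited U (\<lambda>i. z i k)) \<longrightarrow> limited U (abs_poly_eval a d z))"

end

theory Submission
  imports Defs
begin

lemma le_mlen: "\<nu> k \<le> mlen (\<nu>::'n::finite \<Rightarrow> nat)"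
  unfolding mlen_def by (rule member_le_sum) auto

lemma S_sub_box: "{\<nu>::'n::finite \<Rightarrow> nat. mlen \<nu> \<le> D} \<subseteq> PiE UNIV (\<lambda>_. {..D})"
  using le_mlen by (fastforce simp: PiE_def extensional_def intro: order_trans)

lemma finite_S: "finite {\<nu>::'n::finite \<Rightarrow> nat. mlen \<nu> \<le> D}"
  by (rule finite_subset[OF S_sub_box]) (simp add: finite_PiE)

lemma prod_pow_mlen: "(\<Prod>k\<in>UNIV. (c::'a::comm_monoid_mult) ^ \<nu> k) = c ^ mlen \<nu>"
  unfolding mlen_def by (simp add: power_sum)

lemma box_sum:
  fixes q :: real
  assumes "0 \<le> q" "q \<le> 1/2"
  shows "(\<Sum>\<nu>\<in>{\<nu>::'n::finite \<Rightarrow> nat. mlen \<nu> \<le> D}. q ^ mlen \<nu>) \<le> 2 ^ CARD('n)"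
proof -
  have "(\<Sum>\<nu>\<in>{\<nu>::'n::finite \<Rightarrow> nat. mlen \<nu> \<le> D}. q ^ mlen \<nu>)
      \<le> (\<Sum>\<nu>\<in>PiE UNIV (\<lambda>_::'n. {..D}). q ^ mlen \<nu>)"
    by (rule sum_mono2[OF _ S_sub_box]) (use assms in \<open>auto simp: finite_PiE\<close>)
  also have "\<dots> = (\<Sum>\<nu>\<in>PiE UNIV (\<lambda>_::'n. {..D}). \<Prod>k\<in>UNIV. q ^ \<nu> k)"
    by (simp add: prod_pow_mlen)
  also have "\<dots> = (\<Prod>k\<in>(UNIV::'n set). \<Sum>j\<in>{..D}. q ^ j)"
    by (rule prod_sum_PiE[symmetric]) auto
  also have "\<dots> \<le> (\<Prod>k\<in>(UNIV::'n set). 2)"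
  proof (rule prod_mono, safe)
    fix k
    show "0 \<le> (\<Sum>j\<in>{..D}. q ^ j)" using assms by (auto intro: sum_nonneg)
    have "(\<Sum>j\<in>{..D}. q ^ j) \<le> (\<Sum>j\<in>{..D}. (1/2::real) ^ j)"
      by (rule sum_mono, rule power_mono) (use assms in auto)
    also have "\<dots> \<le> 2"
    proof -
      have "(\<Sum>j\<in>{..D}. (1/2::real) ^ j) = (\<Sum>j<Suc D. (1/2::real) ^ j)"
        by (simp add: lessThan_Suc_atMost)
      also have "\<dots> = ((1/2)^Suc D - 1) / (1/2 - 1)"
        by (rule geometric_sum) simp
      also have "\<dots> \<le> 2" by (simp add: field_simps)
      finally show ?thesis .
    qed
    finally show "(\<Sum>j\<in>{..D}. q ^ j) \<le> 2" .
  qed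
  also have "\<dots> = 2 ^ CARD('n)" by simp
  finally show ?thesis .
qed


lemma norm_eval_le:
  "norm (abs_poly_eval a d z i) \<le>
     (\<Sum>\<nu>\<in>{\<nu>::'n::finite \<Rightarrow> nat. mlen \<nu> \<le> d i}. norm (a i \<nu>) * (\<Prod>k\<in>UNIV. norm (z i k) ^ \<nu> k))"
  unfolding abs_poly_eval_def
  by (rule order_trans[OF norm_sum]) (simp add: norm_mult norm_power flip: prod_norm)

lemma eval_const:
  assumes "\<And>k. z i k = complex_of_real c" "0 \<le> c"
  shows "norm (abs_poly_eval a d z i) =
     (\<Sum>\<nu>\<in>{\<nu>::'n::finite \<Rightarrow> nat. mlen \<nu> \<le> d i}. norm (a i \<nu>) * c ^ mlen \<nu>)"
proof -
  have "abs_poly_eval a d z i = complex_of_real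
     (\<Sum>\<nu>\<in>{\<nu>::'n::finite \<Rightarrow> nat. mlen \<nu> \<le> d i}. norm (a i \<nu>) * c ^ mlen \<nu>)"
    unfolding abs_poly_eval_def assms(1) by (simp add: prod_pow_mlen flip: of_real_power of_real_prod)
  moreover have "0 \<le> (\<Sum>\<nu>\<in>{\<nu>::'n::finite \<Rightarrow> nat. mlen \<nu> \<le> d i}. norm (a i \<nu>) * c ^ mlen \<nu>)"
    using assms(2) by (auto intro!: sum_nonneg)
  ultimately show ?thesis by (metis norm_of_real abs_of_nonneg)
qed

lemma ultra_not:
  assumes "ultrafilter U" "\<not> eventually P U"
  shows "eventually (\<lambda>x. \<not> P x) U"
  using assms unfolding ultrafilter_def by blast

lemma ultra_nonbot: "ultrafilter U \<Longrightarrow> \<not> eventually (\<lambda>x. False) U"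
  unfolding ultrafilter_def by (simp add: eventually_False)


lemma fwd1:
  fixes a :: "'i \<Rightarrow> ('n::finite \<Rightarrow> nat) \<Rightarrow> complex"
  assumes "hyp_infinite U d" "abs_bounded U a d"
  shows "limited U (\<lambda>i. a i \<nu>)"
proof -
  define z :: "'i \<Rightarrow> 'n \<Rightarrow> complex" where "z = (\<lambda>i k. complex_of_real 1)"
  have "\<forall>k. limited U (\<lambda>i. z i k)" unfolding limited_def z_def by (auto intro!: exI[of _ 1])
  with assms(2) obtain B where B: "eventually (\<lambda>i. norm (abs_poly_eval a d z i) \<le> B) U"
    unfolding abs_bounded_def limited_def by blast
  have D: "eventually (\<lambda>i. mlen \<nu> < d i) U" using assms(1) unfolding hyp_infinite_def by blast
  have "eventually (\<lambda>i. norm (a i \<nu>) \<le> B) U"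
    using B D
  proof eventually_elim
    case (elim i)
    have "norm (a i \<nu>) = norm (a i \<nu>) * 1 ^ mlen \<nu>" by simp
    also have "\<dots> \<le> (\<Sum>\<mu>\<in>{\<mu>::'n \<Rightarrow> nat. mlen \<mu> \<le> d i}. norm (a i \<mu>) * 1 ^ mlen \<mu>)"
      by (rule member_le_sum) (use elim finite_S in auto)
    also have "\<dots> = norm (abs_poly_eval a d z i)"
      by (rule eval_const[symmetric]) (auto simp: z_def)
    finally show ?case using elim by simp
  qed
  then show ?thesis unfolding limited_def by blast
qed

lemma powr_pow_inv:
  fixes x :: real
  assumes "0 < x" "0 < m"
  shows "(x powr (1 / real m)) ^ m = x"
proof -
  have "(x powr (1 / real m)) ^ m = (x powr (1 / real m)) powr real m"
    using assms by (subst powr_realpow) auto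
  also have "\<dots> = x" using assms by (simp add: powr_powr)
  finally show ?thesis .
qed

lemma fwd2:
  fixes a :: "'i \<Rightarrow> ('n::finite \<Rightarrow> nat) \<Rightarrow> complex"
  assumes U: "ultrafilter U" and "abs_bounded U a d"
    and inf: "hyp_infinite U (\<lambda>i. mlen (\<nu> i))" and le: "eventually (\<lambda>i. mlen (\<nu> i) \<le> d i) U"
  shows "infinitesimal U (\<lambda>i. complex_of_real (norm (a i (\<nu> i)) powr (1 / real (mlen (\<nu> i)))))"
  unfolding infinitesimal_def
proof (intro allI impI, rule ccontr)
  fix r :: real assume r: "0 < r"
  assume "\<not> eventually (\<lambda>i. norm (complex_of_real (norm (a i (\<nu> i)) powr (1 / real (mlen (\<nu> i))))) < r) U"
  from ultra_not[OF U this]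
  have G: "eventually (\<lambda>i. r \<le> norm (a i (\<nu> i)) powr (1 / real (mlen (\<nu> i)))) U"
    by (rule eventually_mono) auto
  define c where "c = 2 / r"
  have c: "0 \<le> c" using r by (simp add: c_def)
  define z :: "'i \<Rightarrow> 'n \<Rightarrow> complex" where "z = (\<lambda>i k. complex_of_real c)"
  have "\<forall>k. limited U (\<lambda>i. z i k)" unfolding limited_def z_def using c by (auto intro!: exI[of _ c])
  with assms(2) obtain B where B: "eventually (\<lambda>i. norm (abs_poly_eval a d z i) \<le> B) U"
    unfolding abs_bounded_def limited_def by blast
  have I: "eventually (\<lambda>i. nat \<lceil>B\<rceil> < mlen (\<nu> i)) U" using inf unfolding hyp_infinite_def by blast
  have "eventually (\<lambda>i. False) U"
    using B I G le
  proof eventually_elim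
    case (elim i)
    define m where "m = mlen (\<nu> i)"
    define x where "x = norm (a i (\<nu> i))"
    have m: "0 < m" using elim m_def by linarith
    have rx: "r \<le> x powr (1 / real m)" using elim by (simp add: m_def x_def)
    then have xpos: "0 < x" using r x_def by (cases "x = 0") auto
    have "r ^ m \<le> (x powr (1 / real m)) ^ m" using rx r by (intro power_mono) auto
    then have rm: "r ^ m \<le> x" using powr_pow_inv[OF xpos m] by simp
    have "(2::real) ^ m = r ^ m * c ^ m" using r by (simp add: c_def flip: power_mult_distrib)
    also have "\<dots> \<le> x * c ^ m" using rm c by (intro mult_right_mono) auto
    also have "\<dots> \<le> (\<Sum>\<mu>\<in>{\<mu>::'n \<Rightarrow> nat. mlen \<mu> \<le> d i}. norm (a i \<mu>) * c ^ mlen \<mu>)"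
      unfolding x_def m_def
      by (rule member_le_sum) (use elim finite_S c in auto)
    also have "\<dots> = norm (abs_poly_eval a d z i)"
      by (rule eval_const[symmetric]) (auto simp: z_def c)
    also have "\<dots> \<le> B" using elim by simp
    finally have "(2::real) ^ m \<le> B" .
    moreover have "real m < 2 ^ m"
    proof -
      have "m < 2 ^ m" by (rule less_exp)
      then have "real m < real (2 ^ m)" by (simp only: of_nat_less_iff)
      then show ?thesis by simp
    qed
    moreover have "B \<le> real (nat \<lceil>B\<rceil>)" by linarith
    ultimately show False using elim(2) m_def by linarith
  qed
  then show False using ultra_nonbot[OF U] by blast
qed


lemma claim:
  fixes a :: "'i \<Rightarrow> ('n::finite \<Rightarrow> nat) \<Rightarrow> complex"
  assumes U: "ultrafilter U"
    and H: "\<forall>\<nu>::'i \<Rightarrow> 'n \<Rightarrow> nat. hyp_infinite U (\<lambda>i. mlen (\<nu> i)) \<longrightarrow>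
          eventually (\<lambda>i. mlen (\<nu> i) \<le> d i) U \<longrightarrow>
          infinitesimal U (\<lambda>i. complex_of_real (norm (a i (\<nu> i)) powr (1 / real (mlen (\<nu> i)))))"
    and r: "0 < r"
  shows "\<exists>N. eventually (\<lambda>i. \<forall>\<nu>. N \<le> mlen \<nu> \<and> mlen \<nu> \<le> d i \<longrightarrow>
            norm (a i \<nu>) powr (1 / real (mlen \<nu>)) < r) U"
proof (rule ccontr)
  define Q where "Q = (\<lambda>i m. \<exists>\<nu>. m \<le> mlen \<nu> \<and> mlen \<nu> \<le> d i \<and>
      \<not> norm (a i \<nu>) powr (1 / real (mlen \<nu>)) < r)"
  assume neg: "\<not> ?thesis"
  have A: "eventually (\<lambda>i. Q i N) U" for N
  proof -
    have "\<not> eventually (\<lambda>i. \<forall>\<nu>. N \<le> mlen \<nu> \<and> mlen \<nu> \<le> d i \<longrightarrow>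
            norm (a i \<nu>) powr (1 / real (mlen \<nu>)) < r) U" using neg by blast
    from ultra_not[OF U this] show ?thesis
      by (rule eventually_mono) (auto simp: Q_def)
  qed
  define f where "f = (\<lambda>i. Greatest (Q i))"
  define \<mu> where "\<mu> = (\<lambda>i. SOME \<nu>. f i \<le> mlen \<nu> \<and> mlen \<nu> \<le> d i \<and>
      \<not> norm (a i \<nu>) powr (1 / real (mlen \<nu>)) < r)"
  have key: "N \<le> mlen (\<mu> i) \<and> mlen (\<mu> i) \<le> d i \<and>
      \<not> norm (a i (\<mu> i)) powr (1 / real (mlen (\<mu> i))) < r" if "Q i N" for i N
  proof -
    have bd: "\<forall>y. Q i y \<longrightarrow> y \<le> d i" unfolding Q_def by auto
    have Qf: "Q i (f i)" unfolding f_def by (rule GreatestI_nat[where P="Q i", OF that]) (use bd in blast)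
    have Nf: "N \<le> f i" unfolding f_def by (rule Greatest_le_nat[where P="Q i", OF that]) (use bd in blast)
    from Qf have "f i \<le> mlen (\<mu> i) \<and> mlen (\<mu> i) \<le> d i \<and>
      \<not> norm (a i (\<mu> i)) powr (1 / real (mlen (\<mu> i))) < r"
      unfolding \<mu>_def Q_def by (rule someI_ex)
    then show ?thesis using Nf by auto
  qed
  have "hyp_infinite U (\<lambda>i. mlen (\<mu> i))"
    unfolding hyp_infinite_def
  proof
    fix N show "eventually (\<lambda>i. N < mlen (\<mu> i)) U"
      using A[of "Suc N"] by (rule eventually_mono) (use key Suc_le_eq in blast)
  qed
  moreover have "eventually (\<lambda>i. mlen (\<mu> i) \<le> d i) U"
    using A[of 0] by (rule eventually_mono) (use key in blast)
  ultimately have "infinitesimal U (\<lambda>i. complex_of_real (norm (a i (\<mu> i)) powr (1 / real (mlen (\<mu> i)))))"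
    using H by blast
  then have "eventually (\<lambda>i. norm (a i (\<mu> i)) powr (1 / real (mlen (\<mu> i))) < r) U"
    unfolding infinitesimal_def using r by auto
  then have "eventually (\<lambda>i. False) U"
    using A[of 0] by eventually_elim (use key in blast)
  then show False using ultra_nonbot[OF U] by blast
qed


lemma root_bound:
  fixes x r :: real
  assumes "0 \<le> x" "0 < m" "x powr (1 / real m) < r"
  shows "x \<le> r ^ m"
proof (cases "x = 0")
  case True then show ?thesis using assms by auto
next
  case False
  then have xp: "0 < x" using assms by simp
  have "(x powr (1 / real m)) ^ m \<le> r ^ m" using assms by (intro power_mono) auto
  then show ?thesis using powr_pow_inv[OF xp assms(2)] by simp
qed

lemma term_bound:
  fixes z :: "'n::finite \<Rightarrow> complex"
  assumes "\<forall>k. norm (z k) \<le> R"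
  shows "(\<Prod>k\<in>UNIV. norm (z k) ^ \<nu> k) \<le> R ^ mlen \<nu>"
proof -
  have "(\<Prod>k\<in>UNIV. norm (z k) ^ \<nu> k) \<le> (\<Prod>k\<in>UNIV. R ^ \<nu> k)"
    by (rule prod_mono) (use assms in \<open>auto intro: power_mono\<close>)
  then show ?thesis by (simp add: prod_pow_mlen)
qed

lemma bwd:
  fixes a :: "'i \<Rightarrow> ('n::finite \<Rightarrow> nat) \<Rightarrow> complex"
  assumes U: "ultrafilter U"
    and lim: "\<forall>\<nu>::'n \<Rightarrow> nat. limited U (\<lambda>i. a i \<nu>)"
    and H: "\<forall>\<nu>::'i \<Rightarrow> 'n \<Rightarrow> nat. hyp_infinite U (\<lambda>i. mlen (\<nu> i)) \<longrightarrow>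
          eventually (\<lambda>i. mlen (\<nu> i) \<le> d i) U \<longrightarrow>
          infinitesimal U (\<lambda>i. complex_of_real (norm (a i (\<nu> i)) powr (1 / real (mlen (\<nu> i)))))"
  shows "abs_bounded U a d"
  unfolding abs_bounded_def
proof (intro allI impI)
  fix z :: "'i \<Rightarrow> 'n \<Rightarrow> complex"
  assume zl: "\<forall>k. limited U (\<lambda>i. z i k)"
  then obtain Rk where Rk: "\<And>k. eventually (\<lambda>i. norm (z i k) \<le> Rk k) U"
    unfolding limited_def by metis
  define R where "R = 1 + (\<Sum>k\<in>UNIV. \<bar>Rk k\<bar>)"
  have R1: "1 \<le> R" unfolding R_def by (simp add: sum_nonneg)
  have RkR: "Rk k \<le> R" for k
  proof -
    have "\<bar>Rk k\<bar> \<le> (\<Sum>k\<in>UNIV. \<bar>Rk k\<bar>)" by (rule member_le_sum) auto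
    then show ?thesis unfolding R_def by linarith
  qed
  have Z: "eventually (\<lambda>i. \<forall>k. norm (z i k) \<le> R) U"
    by (rule eventually_all_finite, rule eventually_mono[OF Rk]) (use RkR order_trans in blast)
  define r where "r = 1 / (2 * R)"
  have r: "0 < r" using R1 by (simp add: r_def)
  have rR: "r * R = 1/2" using R1 by (simp add: r_def)
  from claim[OF U H r] obtain N0 where N0: "eventually (\<lambda>i. \<forall>\<nu>. N0 \<le> mlen \<nu> \<and> mlen \<nu> \<le> d i \<longrightarrow>
            norm (a i \<nu>) powr (1 / real (mlen \<nu>)) < r) U" by blast
  define N where "N = max N0 1"
  define L where "L = {\<nu>::'n \<Rightarrow> nat. mlen \<nu> < N}"
  have finL: "finite L" unfolding L_def by (rule finite_subset[OF _ finite_S[of N]]) auto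
  from lim obtain Ba where Ba: "\<And>\<nu>. eventually (\<lambda>i. norm (a i \<nu>) \<le> Ba \<nu>) U"
    unfolding limited_def by metis
  have EA: "eventually (\<lambda>i. \<forall>\<nu>\<in>L. norm (a i \<nu>) \<le> Ba \<nu>) U"
    by (rule eventually_ball_finite[OF finL]) (use Ba in blast)
  define C where "C = (\<Sum>\<nu>\<in>L. \<bar>Ba \<nu>\<bar> * R ^ N) + 2 ^ CARD('n)"
  have "eventually (\<lambda>i. norm (abs_poly_eval a d z i) \<le> C) U"
    using Z EA N0
  proof eventually_elim
    case (elim i)
    define S where "S = {\<nu>::'n \<Rightarrow> nat. mlen \<nu> \<le> d i}"
    define t where "t = (\<lambda>\<nu>. norm (a i \<nu>) * (\<Prod>k\<in>UNIV. norm (z i k) ^ \<nu> k))"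
    have finS: "finite S" unfolding S_def by (rule finite_S)
    have t0: "0 \<le> t \<nu>" for \<nu> unfolding t_def by (intro mult_nonneg_nonneg prod_nonneg) auto
    have tR: "t \<nu> \<le> norm (a i \<nu>) * R ^ mlen \<nu>" for \<nu>
      unfolding t_def by (rule mult_left_mono[OF term_bound]) (use elim in auto)
    have "norm (abs_poly_eval a d z i) \<le> sum t S"
      unfolding S_def t_def by (rule norm_eval_le)
    also have "\<dots> = sum t (S \<inter> L) + sum t (S - L)"
      by (rule sum.Int_Diff[OF finS])
    also have "sum t (S \<inter> L) \<le> (\<Sum>\<nu>\<in>L. \<bar>Ba \<nu>\<bar> * R ^ N)"
    proof -
      have "sum t (S \<inter> L) \<le> sum t L" by (rule sum_mono2[OF finL]) (auto intro: t0)
      also have "\<dots> \<le> (\<Sum>\<nu>\<in>L. \<bar>Ba \<nu>\<bar> * R ^ N)"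
      proof (rule sum_mono)
        fix \<nu> assume \<nu>: "\<nu> \<in> L"
        have "t \<nu> \<le> norm (a i \<nu>) * R ^ mlen \<nu>" by (rule tR)
        also have "\<dots> \<le> \<bar>Ba \<nu>\<bar> * R ^ N"
        proof (rule mult_mono)
          show "norm (a i \<nu>) \<le> \<bar>Ba \<nu>\<bar>" using elim \<nu> by force
          show "R ^ mlen \<nu> \<le> R ^ N" using R1 \<nu> by (intro power_increasing) (auto simp: L_def)
        qed (use R1 in auto)
        finally show "t \<nu> \<le> \<bar>Ba \<nu>\<bar> * R ^ N" .
      qed
      finally show ?thesis .
    qed
    also have "sum t (S - L) \<le> 2 ^ CARD('n)"
    proof -
      have "sum t (S - L) \<le> (\<Sum>\<nu>\<in>S - L. (1/2::real) ^ mlen \<nu>)"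
      proof (rule sum_mono)
        fix \<nu> assume \<nu>: "\<nu> \<in> S - L"
        then have m: "N \<le> mlen \<nu>" "mlen \<nu> \<le> d i" by (auto simp: S_def L_def)
        then have "norm (a i \<nu>) powr (1 / real (mlen \<nu>)) < r" using elim unfolding N_def by auto
        then have ar: "norm (a i \<nu>) \<le> r ^ mlen \<nu>"
          by (rule root_bound[rotated 2]) (use m in \<open>auto simp: N_def\<close>)
        have "t \<nu> \<le> norm (a i \<nu>) * R ^ mlen \<nu>" by (rule tR)
        also have "\<dots> \<le> r ^ mlen \<nu> * R ^ mlen \<nu>" using ar R1 by (intro mult_right_mono) auto
        also have "\<dots> = (1/2) ^ mlen \<nu>" by (simp add: rR flip: power_mult_distrib)
        finally show "t \<nu> \<le> (1/2) ^ mlen \<nu>" .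
      qed
      also have "\<dots> \<le> (\<Sum>\<nu>\<in>S. (1/2::real) ^ mlen \<nu>)"
        by (rule sum_mono2[OF finS]) auto
      also have "\<dots> \<le> 2 ^ CARD('n)" unfolding S_def by (rule box_sum) auto
      finally show ?thesis .
    qed
    finally show ?case unfolding C_def by simp
  qed
  then show "limited U (abs_poly_eval a d z)" unfolding limited_def by blast
qed

theorem proposition1p4p2:
  fixes U :: "'i filter"
    and a :: "'i \<Rightarrow> ('n::finite \<Rightarrow> nat) \<Rightarrow> complex"
    and d :: "'i \<Rightarrow> nat"
  assumes "ultrafilter U" and "nonprincipal U"
    and "hyp_infinite U d"
  shows "abs_bounded U a d \<longleftrightarrow>
     ((\<forall>\<nu>::'n \<Rightarrow> nat. limited U (\<lambda>i. a i \<nu>)) \<and>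
      (\<forall>\<nu>::'i \<Rightarrow> 'n \<Rightarrow> nat. hyp_infinite U (\<lambda>i. mlen (\<nu> i)) \<longrightarrow>
          eventually (\<lambda>i. mlen (\<nu> i) \<le> d i) U \<longrightarrow>
          infinitesimal U (\<lambda>i. complex_of_real (norm (a i (\<nu> i)) powr (1 / real (mlen (\<nu> i)))))))"
  using fwd1[OF assms(3)] fwd2[OF assms(1)] bwd[OF assms(1)] by blast

end
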